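(* Let $\alpha,\beta$ be compositions with $\beta\subseteq\alpha$, let $n=|\alpha/\beta|$, and let $M\in\mathrm{SET}(\alpha/\beta)$. Then $M$ is a minimal element of the poset $\mathrm{SET}(\alpha/\beta)$ if and only if, for every $i=1,2,\ldots,n-1$, one of the following holds in $M$: (1) $i$ and $i+1$ lie in consecutive cells of the same row of $\alpha/\beta$; (2) $i$ and $i+1$ lie in the same column of $\alpha/\beta$ (with $i+1$ above $i$ and no cell of $\alpha/\beta$ between them); (3) $i$ lies in a row of $\alpha/\beta$ strictly higher than the row of $i+1$.
   Context: A composition $\alpha=(\alpha_1,\ldots,\alpha_k)$ is a finite sequence of positive integers, $|\alpha|=\sum\alpha_i$, $\ell(\alpha)=k$. Its diagram has rows numbered from the bottom (row 1 is lowest), row $i$ consisting of the cells in columns $1,\ldots,\alpha_i$. For compositions with $\beta\subseteq\alpha$ (i.e. $\ell(\beta)\le\ell(\alpha)$ and $\beta_j\le\alpha_j$ for $j\le\ell(\beta)$), the skew diagram $\alpha/\beta$ consists of the cells in row $i$ and column $j$ with $\beta_i<j\le\alpha_i$ (where $\beta_i=0$ for $i>\ell(\beta)$); $|\alpha/\beta|=|\alpha|-|\beta|$. A standard immaculate tableau of shape $\alpha/\beta$ is a bijective filling of the cells of $\alpha/\beta$ with $1,\ldots,|\alpha/\beta|$ such that rows increase left to right and the entries in column 1 increase bottom to top; $\mathrm{SIT}(\alpha/\beta)$ is the set of these. $\mathrm{SET}(\alpha/\beta)\subseteq\mathrm{SIT}(\alpha/\beta)$ is the set of such fillings in which all rows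 increase left to right and all columns increase bottom to top (standard extended tableaux). For $1\le i\le n-1$ and $T\in\mathrm{SIT}(\alpha/\beta)$, the row-strict operator is $\pi_i(T)=T$ if $i+1$ is in a strictly higher row than $i$; $\pi_i(T)=s_i(T)$ (the tableau obtained by swapping the entries $i$ and $i+1$) if $i+1$ is in a strictly lower row than $i$; and $\pi_i(T)=0$ otherwise. This makes $\mathrm{SIT}(\alpha/\beta)$ a poset with $T\le T'$ iff $T'$ is obtained from $T$ by applying a sequence of operators $\pi_{i}$ (with all intermediate results nonzero); $\mathrm{SET}(\alpha/\beta)$ carries the induced order. An element $M$ is minimal in $\mathrm{SET}(\alpha/\beta)$ if there is no $T\in\mathrm{SET}(\alpha/\beta)$ with $T\neq M$ and $T<M$. *)

theory Defs
  imports Main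
begin

text \<open>Compositions are lists of positive naturals; entry k of the list (0-based)
  is the length of row k+1 (rows numbered from the bottom, starting at 1).
  Cells are pairs (row, column), both 1-based.\<close>

definition composition :: "nat list \<Rightarrow> bool" where
  "composition \<alpha> \<longleftrightarrow> (\<forall>x\<in>set \<alpha>. 0 < x)"

definition comp_size :: "nat list \<Rightarrow> nat" where
  "comp_size \<alpha> = sum_list \<alpha>"

definition part :: "nat list \<Rightarrow> nat \<Rightarrow> nat" where
  "part \<alpha> i = (if 1 \<le> i \<and> i \<le> length \<alpha> then \<alpha> ! (i - 1) else 0)"

definition comp_contained :: "nat list \<Rightarrow> nat list \<Rightarrow> bool" where
  "comp_contained \<beta> \<alpha> \<longleftrightarrow> length \<beta> \<le> length \<alpha> \<and>
     (\<forall>j. 1 \<le> j \<and> j \<le> length \<beta> \<longrightarrow> part \<beta> j \<le> part \<alpha> j)"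

definition skew_cells :: "nat list \<Rightarrow> nat list \<Rightarrow> (nat \<times> nat) set" where
  "skew_cells \<alpha> \<beta> = {(i, j). 1 \<le> i \<and> i \<le> length \<alpha> \<and> part \<beta> i < j \<and> j \<le> part \<alpha> i}"

definition skew_size :: "nat list \<Rightarrow> nat list \<Rightarrow> nat" where
  "skew_size \<alpha> \<beta> = comp_size \<alpha> - comp_size \<beta>"

text \<open>A filling is a function on cells; to make fillings canonical we require
  the value 0 outside the skew diagram.\<close>
type_synonym tableau = "nat \<times> nat \<Rightarrow> nat"

definition SIT :: "nat list \<Rightarrow> nat list \<Rightarrow> tableau set" where
  "SIT \<alpha> \<beta> = {T. bij_betw T (skew_cells \<alpha> \<beta>) {1..skew_size \<alpha> \<beta>}
      \<and> (\<forall>c. c \<notin> skew_cells \<alpha> \<beta> \<longrightarrow> T c = 0)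
      \<and> (\<forall>i j j'. (i, j) \<in> skew_cells \<alpha> \<beta> \<and> (i, j') \<in> skew_cells \<alpha> \<beta> \<and> j < j'
              \<longrightarrow> T (i, j) < T (i, j'))
      \<and> (\<forall>i i'. (i, 1) \<in> skew_cells \<alpha> \<beta> \<and> (i', 1) \<in> skew_cells \<alpha> \<beta> \<and> i < i'
              \<longrightarrow> T (i, 1) < T (i', 1))}"

definition SET :: "nat list \<Rightarrow> nat list \<Rightarrow> tableau set" where
  "SET \<alpha> \<beta> = {T \<in> SIT \<alpha> \<beta>.
      (\<forall>i i' j. (i, j) \<in> skew_cells \<alpha> \<beta> \<and> (i', j) \<in> skew_cells \<alpha> \<beta> \<and> i < i'
              \<longrightarrow> T (i, j) < T (i', j))}"

definition pos :: "nat list \<Rightarrow> nat list \<Rightarrow> tableau \<Rightarrow> nat \<Rightarrow> nat \<times> nat" where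
  "pos \<alpha> \<beta> T k = (THE c. c \<in> skew_cells \<alpha> \<beta> \<and> T c = k)"

definition swap_entries :: "nat \<Rightarrow> tableau \<Rightarrow> tableau" where
  "swap_entries i T = (\<lambda>c. if T c = i then i + 1 else if T c = i + 1 then i else T c)"

text \<open>Row-strict operator; None plays the role of 0.\<close>
definition pi_op :: "nat list \<Rightarrow> nat list \<Rightarrow> nat \<Rightarrow> tableau \<Rightarrow> tableau option" where
  "pi_op \<alpha> \<beta> i T =
     (if fst (pos \<alpha> \<beta> T i) < fst (pos \<alpha> \<beta> T (i + 1)) then Some T
      else if fst (pos \<alpha> \<beta> T (i + 1)) < fst (pos \<alpha> \<beta> T i) then Some (swap_entries i T)
      else None)"

definition pi_step :: "nat list \<Rightarrow> nat list \<Rightarrow> tableau \<Rightarrow> tableau \<Rightarrow> bool" where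
  "pi_step \<alpha> \<beta> T T' \<longleftrightarrow>
     (\<exists>i. 1 \<le> i \<and> i \<le> skew_size \<alpha> \<beta> - 1 \<and> pi_op \<alpha> \<beta> i T = Some T')"

definition sit_le :: "nat list \<Rightarrow> nat list \<Rightarrow> tableau \<Rightarrow> tableau \<Rightarrow> bool" where
  "sit_le \<alpha> \<beta> T T' \<longleftrightarrow> T \<in> SIT \<alpha> \<beta> \<and> (pi_step \<alpha> \<beta>)\<^sup>*\<^sup>* T T'"

definition minimal_SET :: "nat list \<Rightarrow> nat list \<Rightarrow> tableau \<Rightarrow> bool" where
  "minimal_SET \<alpha> \<beta> M \<longleftrightarrow> M \<in> SET \<alpha> \<beta> \<and>
     \<not> (\<exists>T\<in>SET \<alpha> \<beta>. T \<noteq> M \<and> sit_le \<alpha> \<beta> T M)"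

end

theory Submission
  imports Defs
begin

lemma pos_props:
  assumes T: "T \<in> SIT \<alpha> \<beta>" and k: "1 \<le> k" "k \<le> skew_size \<alpha> \<beta>"
  shows "pos \<alpha> \<beta> T k \<in> skew_cells \<alpha> \<beta> \<and> T (pos \<alpha> \<beta> T k) = k"
proof -
  have bij: "bij_betw T (skew_cells \<alpha> \<beta>) {1..skew_size \<alpha> \<beta>}" using T by (simp add: SIT_def)
  then have "k \<in> T ` skew_cells \<alpha> \<beta>" using k by (simp add: bij_betw_def)
  then obtain c where c: "c \<in> skew_cells \<alpha> \<beta>" "T c = k" by auto
  have "\<exists>!c. c \<in> skew_cells \<alpha> \<beta> \<and> T c = k"
    using c bij by (metis bij_betw_def inj_onD)
  then show ?thesis unfolding pos_def by (rule theI')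
qed

lemma pos_eq:
  assumes T: "T \<in> SIT \<alpha> \<beta>" and c: "c \<in> skew_cells \<alpha> \<beta>" "T c = k"
  shows "pos \<alpha> \<beta> T k = c"
proof -
  have bij: "bij_betw T (skew_cells \<alpha> \<beta>) {1..skew_size \<alpha> \<beta>}" using T by (simp add: SIT_def)
  show ?thesis unfolding pos_def
    by (rule the_equality) (use c bij in \<open>auto simp: bij_betw_def inj_on_def\<close>)
qed

lemma swap_lt:
  assumes "T x < T y" "\<not> (T x = i \<and> T y = i + 1)"
  shows "swap_entries i T x < swap_entries i T y"
  using assms by (auto simp: swap_entries_def)

lemma swap_swap: "swap_entries i (swap_entries i T) = T"
  by (auto simp: swap_entries_def fun_eq_iff)

lemma swap_SET:
  assumes T: "T \<in> SET \<alpha> \<beta>" and i: "1 \<le> i" "i + 1 \<le> skew_size \<alpha> \<beta>"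
    and rows: "fst (pos \<alpha> \<beta> T i) \<noteq> fst (pos \<alpha> \<beta> T (i + 1))"
    and cols: "\<not> (snd (pos \<alpha> \<beta> T i) = snd (pos \<alpha> \<beta> T (i + 1))
                  \<and> fst (pos \<alpha> \<beta> T i) < fst (pos \<alpha> \<beta> T (i + 1)))"
  shows "swap_entries i T \<in> SET \<alpha> \<beta>"
proof -
  define S where "S = skew_cells \<alpha> \<beta>"
  define n where "n = skew_size \<alpha> \<beta>"
  have TS: "T \<in> SIT \<alpha> \<beta>" using T by (simp add: SET_def)
  have bij: "bij_betw T S {1..n}" and zero: "\<forall>c. c \<notin> S \<longrightarrow> T c = 0"
    and rw: "\<forall>r j j'. (r, j) \<in> S \<and> (r, j') \<in> S \<and> j < j' \<longrightarrow> T (r, j) < T (r, j')"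
    and c1: "\<forall>r r'. (r, 1) \<in> S \<and> (r', 1) \<in> S \<and> r < r' \<longrightarrow> T (r, 1) < T (r', 1)"
    and cl: "\<forall>r r' j. (r, j) \<in> S \<and> (r', j) \<in> S \<and> r < r' \<longrightarrow> T (r, j) < T (r', j)"
    using T by (auto simp: SET_def SIT_def S_def n_def)
  have pa: "pos \<alpha> \<beta> T i \<in> S" "T (pos \<alpha> \<beta> T i) = i"
    using pos_props[OF TS, of i] i by (auto simp: S_def)
  have pb: "pos \<alpha> \<beta> T (i+1) \<in> S" "T (pos \<alpha> \<beta> T (i+1)) = i + 1"
    using pos_props[OF TS, of "i+1"] i by (auto simp: S_def)
  have idx: "\<And>x. x \<in> S \<Longrightarrow> T x = i \<Longrightarrow> x = pos \<alpha> \<beta> T i"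
    using pos_eq[OF TS] by (auto simp: S_def)
  have idx2: "\<And>x. x \<in> S \<Longrightarrow> T x = i + 1 \<Longrightarrow> x = pos \<alpha> \<beta> T (i+1)"
    using pos_eq[OF TS] by (auto simp: S_def)
  define s where "s = (\<lambda>v::nat. if v = i then i + 1 else if v = i + 1 then i else v)"
  have sw: "swap_entries i T = s \<circ> T" by (auto simp: swap_entries_def s_def fun_eq_iff)
  have sbij: "bij_betw s {1..n} {1..n}"
    by (rule bij_betw_byWitness[where f'=s]) (use i in \<open>auto simp: s_def n_def\<close>)
  have b1: "bij_betw (swap_entries i T) S {1..n}"
    unfolding sw by (rule bij_betw_trans[OF bij sbij])
  have b2: "\<forall>c. c \<notin> S \<longrightarrow> swap_entries i T c = 0"
    using zero i by (auto simp: swap_entries_def)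
  have b3: "\<forall>r j j'. (r, j) \<in> S \<and> (r, j') \<in> S \<and> j < j' \<longrightarrow>
      swap_entries i T (r, j) < swap_entries i T (r, j')"
  proof (intro allI impI)
    fix r j j' assume h: "(r, j) \<in> S \<and> (r, j') \<in> S \<and> j < j'"
    show "swap_entries i T (r, j) < swap_entries i T (r, j')"
    proof (rule swap_lt)
      show "T (r, j) < T (r, j')" using rw h by blast
      show "\<not> (T (r, j) = i \<and> T (r, j') = i + 1)"
        using idx idx2 h rows by (metis fst_conv)
    qed
  qed
  have b5: "\<forall>r r' j. (r, j) \<in> S \<and> (r', j) \<in> S \<and> r < r' \<longrightarrow>
      swap_entries i T (r, j) < swap_entries i T (r', j)"
  proof (intro allI impI)
    fix r r' j assume h: "(r, j) \<in> S \<and> (r', j) \<in> S \<and> r < r'"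
    show "swap_entries i T (r, j) < swap_entries i T (r', j)"
    proof (rule swap_lt)
      show "T (r, j) < T (r', j)" using cl h by blast
      show "\<not> (T (r, j) = i \<and> T (r', j) = i + 1)"
        using idx idx2 h cols by (metis fst_conv snd_conv)
    qed
  qed
  show ?thesis using b1 b2 b3 b5 unfolding SET_def SIT_def S_def n_def by auto
qed


lemma step_SET:
  assumes T: "T \<in> SET \<alpha> \<beta>" and st: "pi_step \<alpha> \<beta> T T'"
  shows "T' \<in> SET \<alpha> \<beta>"
proof -
  obtain i where i: "1 \<le> i" "i \<le> skew_size \<alpha> \<beta> - 1" and op: "pi_op \<alpha> \<beta> i T = Some T'"
    using st by (auto simp: pi_step_def)
  show ?thesis
  proof (cases "fst (pos \<alpha> \<beta> T i) < fst (pos \<alpha> \<beta> T (i + 1))")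
    case True then show ?thesis using op T by (simp add: pi_op_def)
  next
    case False
    then have lt: "fst (pos \<alpha> \<beta> T (i + 1)) < fst (pos \<alpha> \<beta> T i)" and eq: "T' = swap_entries i T"
      using op by (auto simp: pi_op_def split: if_splits)
    show ?thesis unfolding eq
      by (rule swap_SET[OF T]) (use i lt in auto)
  qed
qed

lemma steps_SET:
  assumes "(pi_step \<alpha> \<beta>)\<^sup>*\<^sup>* T T'" "T \<in> SET \<alpha> \<beta>"
  shows "T' \<in> SET \<alpha> \<beta>"
  using assms by (induction rule: rtranclp_induct) (auto intro: step_SET)

definition cond :: "nat list \<Rightarrow> nat list \<Rightarrow> tableau \<Rightarrow> nat \<Rightarrow> bool" where
  "cond \<alpha> \<beta> M i = (let (r, c) = pos \<alpha> \<beta> M i; (r', c') = pos \<alpha> \<beta> M (i + 1) in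
          (r' = r \<and> c' = c + 1)
        \<or> (c' = c \<and> r < r' \<and> (\<forall>r''. r < r'' \<and> r'' < r' \<longrightarrow> (r'', c) \<notin> skew_cells \<alpha> \<beta>))
        \<or> r' < r)"

lemma cond_alt: "cond \<alpha> \<beta> M i \<longleftrightarrow>
   (fst (pos \<alpha> \<beta> M (i+1)) = fst (pos \<alpha> \<beta> M i) \<and> snd (pos \<alpha> \<beta> M (i+1)) = snd (pos \<alpha> \<beta> M i) + 1)
 \<or> (snd (pos \<alpha> \<beta> M (i+1)) = snd (pos \<alpha> \<beta> M i) \<and> fst (pos \<alpha> \<beta> M i) < fst (pos \<alpha> \<beta> M (i+1)) \<and>
     (\<forall>r''. fst (pos \<alpha> \<beta> M i) < r'' \<and> r'' < fst (pos \<alpha> \<beta> M (i+1)) \<longrightarrow> (r'', snd (pos \<alpha> \<beta> M i)) \<notin> skew_cells \<alpha> \<beta>))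
 \<or> fst (pos \<alpha> \<beta> M (i+1)) < fst (pos \<alpha> \<beta> M i)"
  unfolding cond_def by (simp add: Let_def split: prod.splits)

lemma bwd:
  assumes M: "M \<in> SET \<alpha> \<beta>"
    and C: "\<forall>i. 1 \<le> i \<and> i \<le> skew_size \<alpha> \<beta> - 1 \<longrightarrow> cond \<alpha> \<beta> M i"
  shows "minimal_SET \<alpha> \<beta> M"
proof -
  have key: "(pi_step \<alpha> \<beta>)\<^sup>*\<^sup>* T M' \<Longrightarrow> T \<in> SET \<alpha> \<beta> \<Longrightarrow>
     (\<forall>i. 1 \<le> i \<and> i \<le> skew_size \<alpha> \<beta> - 1 \<longrightarrow> cond \<alpha> \<beta> M' i) \<Longrightarrow> T = M'" for T M'
  proof (induction rule: rtranclp_induct)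
    case base then show ?case by simp
  next
    case (step y z)
    have yS: "y \<in> SET \<alpha> \<beta>" using steps_SET step by blast
    have zS: "z \<in> SET \<alpha> \<beta>" using step_SET[OF yS step(2)] .
    have yI: "y \<in> SIT \<alpha> \<beta>" "z \<in> SIT \<alpha> \<beta>" using yS zS by (auto simp: SET_def)
    obtain i where i: "1 \<le> i" "i \<le> skew_size \<alpha> \<beta> - 1" and op: "pi_op \<alpha> \<beta> i y = Some z"
      using step(2) by (auto simp: pi_step_def)
    show ?case
    proof (cases "fst (pos \<alpha> \<beta> y i) < fst (pos \<alpha> \<beta> y (i + 1))")
      case True then have "z = y" using op by (simp add: pi_op_def)
      then show ?thesis using step by simp
    next
      case False
      then have lt: "fst (pos \<alpha> \<beta> y (i + 1)) < fst (pos \<alpha> \<beta> y i)" and eq: "z = swap_entries i y"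
        using op by (auto simp: pi_op_def split: if_splits)
      define a where "a = pos \<alpha> \<beta> y i"
      define b where "b = pos \<alpha> \<beta> y (i+1)"
      have pa: "a \<in> skew_cells \<alpha> \<beta>" "y a = i" using pos_props[OF yI(1), of i] i by (auto simp: a_def)
      have pb: "b \<in> skew_cells \<alpha> \<beta>" "y b = i+1" using pos_props[OF yI(1), of "i+1"] i by (auto simp: b_def)
      have za: "z a = i + 1" "z b = i" using pa pb eq by (auto simp: swap_entries_def)
      have pz: "pos \<alpha> \<beta> z i = b" "pos \<alpha> \<beta> z (i+1) = a"
        using pos_eq[OF yI(2)] pa pb za by auto
      have "cond \<alpha> \<beta> z i" using step(5) i by blast
      then have "snd a = snd b \<and> fst b < fst a"
        using lt unfolding cond_alt pz a_def[symmetric] b_def[symmetric] by auto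
      then have "y b < y a" using yS pa pb unfolding SET_def
        by (metis (no_types, lifting) mem_Collect_eq prod.collapse)
      then show ?thesis using pa pb by simp
    qed
  qed
  show ?thesis unfolding minimal_SET_def sit_le_def using M key C by blast
qed


lemma fwd:
  assumes min: "minimal_SET \<alpha> \<beta> M" and i: "1 \<le> i" "i \<le> skew_size \<alpha> \<beta> - 1"
  shows "cond \<alpha> \<beta> M i"
proof (rule ccontr)
  assume nc: "\<not> cond \<alpha> \<beta> M i"
  have M: "M \<in> SET \<alpha> \<beta>" using min by (simp add: minimal_SET_def)
  have MI: "M \<in> SIT \<alpha> \<beta>" using M by (simp add: SET_def)
  define a where "a = pos \<alpha> \<beta> M i"
  define b where "b = pos \<alpha> \<beta> M (i+1)"
  have pa: "a \<in> skew_cells \<alpha> \<beta>" "M a = i" using pos_props[OF MI, of i] i by (auto simp: a_def)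
  have pb: "b \<in> skew_cells \<alpha> \<beta>" "M b = i+1" using pos_props[OF MI, of "i+1"] i by (auto simp: b_def)
  have rw: "\<And>r j j'. (r, j) \<in> skew_cells \<alpha> \<beta> \<Longrightarrow> (r, j') \<in> skew_cells \<alpha> \<beta> \<Longrightarrow> j < j' \<Longrightarrow> M (r, j) < M (r, j')"
    and cl: "\<And>r r' j. (r, j) \<in> skew_cells \<alpha> \<beta> \<Longrightarrow> (r', j) \<in> skew_cells \<alpha> \<beta> \<Longrightarrow> r < r' \<Longrightarrow> M (r, j) < M (r', j)"
    using M by (auto simp: SET_def SIT_def)
  obtain r c where ac: "a = (r, c)" by fastforce
  obtain r' c' where bc: "b = (r', c')" by fastforce
  have nc': "\<not> ((r' = r \<and> c' = c + 1)
        \<or> (c' = c \<and> r < r' \<and> (\<forall>r''. r < r'' \<and> r'' < r' \<longrightarrow> (r'', c) \<notin> skew_cells \<alpha> \<beta>))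
        \<or> r' < r)"
    using nc unfolding cond_alt a_def[symmetric] b_def[symmetric] ac bc by simp
  have rr: "r < r'"
  proof (rule ccontr)
    assume "\<not> r < r'"
    with nc' have req: "r' = r" by auto
    have "c < c'"
    proof (rule ccontr)
      assume "\<not> c < c'"
      then have "c' < c \<or> c' = c" by auto
      then show False
      proof
        assume "c' < c" then have "M b < M a" using rw[of r c' c] pa pb ac bc req by simp
        then show False using pa pb by simp
      next
        assume "c' = c" then show False using pa pb ac bc req by simp
      qed
    qed
    with nc' req have "c + 1 < c'" by auto
    have "(r, c + 1) \<in> skew_cells \<alpha> \<beta>"
      using pa pb ac bc req \<open>c + 1 < c'\<close> by (auto simp: skew_cells_def)
    then have "M (r, c) < M (r, c+1)" "M (r, c+1) < M (r, c')"
      using rw[of r c "c+1"] rw[of r "c+1" c'] pa pb ac bc req \<open>c + 1 < c'\<close> by auto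
    then show False using pa pb ac bc req by simp
  qed
  have cc: "c \<noteq> c'"
  proof
    assume ceq: "c = c'"
    with nc' rr obtain r'' where r'': "r < r''" "r'' < r'" "(r'', c) \<in> skew_cells \<alpha> \<beta>" by auto
    then have "M (r, c) < M (r'', c)" "M (r'', c) < M (r', c)"
      using cl[of r c r''] cl[of r'' c r'] pa pb ac bc ceq by auto
    then show False using pa pb ac bc ceq by simp
  qed
  define T where "T = swap_entries i M"
  have TS: "T \<in> SET \<alpha> \<beta>" unfolding T_def
    by (rule swap_SET[OF M]) (use i rr cc ac bc a_def b_def in auto)
  have TI: "T \<in> SIT \<alpha> \<beta>" using TS by (simp add: SET_def)
  have ta: "T a = i + 1" "T b = i" using pa pb by (auto simp: T_def swap_entries_def)
  have pt: "pos \<alpha> \<beta> T i = b" "pos \<alpha> \<beta> T (i+1) = a"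
    using pos_eq[OF TI] pa pb ta by auto
  have "pi_op \<alpha> \<beta> i T = Some M"
    using rr ac bc unfolding pi_op_def pt by (simp add: T_def swap_swap)
  then have st: "pi_step \<alpha> \<beta> T M" using i by (auto simp: pi_step_def)
  have "T \<noteq> M" using ta pa by auto
  then show False using min TS TI st unfolding minimal_SET_def sit_le_def by blast
qed

theorem lemma3p1:
  fixes \<alpha> \<beta> :: "nat list" and M :: tableau
  assumes "composition \<alpha>" and "composition \<beta>" and "comp_contained \<beta> \<alpha>"
    and "M \<in> SET \<alpha> \<beta>"
  shows "minimal_SET \<alpha> \<beta> M \<longleftrightarrow>
    (\<forall>i. 1 \<le> i \<and> i \<le> skew_size \<alpha> \<beta> - 1 \<longrightarrow>
       (let (r, c) = pos \<alpha> \<beta> M i; (r', c') = pos \<alpha> \<beta> M (i + 1) in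
          (r' = r \<and> c' = c + 1)
        \<or> (c' = c \<and> r < r' \<and> (\<forall>r''. r < r'' \<and> r'' < r' \<longrightarrow> (r'', c) \<notin> skew_cells \<alpha> \<beta>))
        \<or> r' < r))"
  using fwd bwd[OF assms(4)] unfolding cond_def by blast

end
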